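(* Let $X$ be a real vector space and let $A\subseteq X$ be convex and relatively solid. Then (1) $cor(A^c)=int_c(A^c)$, where $A^c=X\setminus A$; (2) $\delta A=vcl(A)\setminus cor(A)$, where $\delta A$ is the algebraic boundary of $A$.
   Context: For $C\subseteq X$: $cor(C):=\{x\in C:\ \forall x'\in X\ \exists \lambda'>0 \text{ with } x+\lambda x'\in C\ \forall\lambda\in[0,\lambda']\}$; $icr(C):=\{x\in C:\ \forall x'\in span(C-C)\ \exists \lambda'>0 \text{ with } x+\lambda x'\in C\ \forall\lambda\in[0,\lambda']\}$, and $C$ is relatively solid if $icr(C)\neq\emptyset$; $vcl(C):=\{b\in X:\ \exists x\in X \text{ such that } \forall\lambda'>0\ \exists\lambda\in[0,\lambda'] \text{ with } b+\lambda x\in C\}$. The algebraic boundary $\delta C$ is the set of points of $X$ belonging neither to $cor(C)$ nor to $cor(X\setminus C)$. The core convex topology $\tau_c$ is the topology on $X$ whose open sets are the unions of families of convex sets $B$ with $cor(B)=B$; $int_c$ denotes interior in $\tau_c$. *)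

theory Defs
  imports "HOL-Analysis.Analysis"
begin

definition cor :: "'a::real_vector set \<Rightarrow> 'a set" where
  "cor C = {x \<in> C. \<forall>x'. \<exists>l'>0. \<forall>l\<in>{0..l'}. x + l *\<^sub>R x' \<in> C}"

definition icr :: "'a::real_vector set \<Rightarrow> 'a set" where
  "icr C = {x \<in> C. \<forall>x'\<in>span {a - b | a b. a \<in> C \<and> b \<in> C}.
              \<exists>l'>0. \<forall>l\<in>{0..l'}. x + l *\<^sub>R x' \<in> C}"

definition relatively_solid :: "'a::real_vector set \<Rightarrow> bool" where
  "relatively_solid C \<longleftrightarrow> icr C \<noteq> {}"

definition vcl :: "'a::real_vector set \<Rightarrow> 'a set" where
  "vcl C = {b. \<exists>x. \<forall>l'>0. \<exists>l\<in>{0..l'}. b + l *\<^sub>R x \<in> C}"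

definition alg_boundary :: "'a::real_vector set \<Rightarrow> 'a set" where
  "alg_boundary C = {x. x \<notin> cor C \<and> x \<notin> cor (UNIV - C)}"

definition core_convex_topology :: "'a::real_vector topology" where
  "core_convex_topology =
     topology (\<lambda>U. \<exists>F. (\<forall>B\<in>F. convex B \<and> cor B = B) \<and> U = \<Union>F)"

definition int_c :: "'a::real_vector set \<Rightarrow> 'a set" where
  "int_c S = core_convex_topology interior_of S"

end

theory Submission
  imports Defs
begin

lemma cor_subset: "cor C \<subseteq> C"
  unfolding cor_def by auto

lemma cor_inter:
  assumes "cor B = B" "cor C = C"
  shows "cor (B \<inter> C) = B \<inter> C"
proof
  show "cor (B \<inter> C) \<subseteq> B \<inter> C" by (rule cor_subset)
  show "B \<inter> C \<subseteq> cor (B \<inter> C)"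
  proof
    fix x assume x: "x \<in> B \<inter> C"
    have "\<exists>l'>0. \<forall>l\<in>{0..l'}. x + l *\<^sub>R v \<in> B \<inter> C" for v
    proof -
      from x assms obtain l1 where l1: "l1 > 0" "\<forall>l\<in>{0..l1}. x + l *\<^sub>R v \<in> B"
        unfolding cor_def by blast
      from x assms obtain l2 where l2: "l2 > 0" "\<forall>l\<in>{0..l2}. x + l *\<^sub>R v \<in> C"
        unfolding cor_def by blast
      show ?thesis using l1 l2 by (intro exI[of _ "min l1 l2"]) auto
    qed
    with x show "x \<in> cor (B \<inter> C)" unfolding cor_def by blast
  qed
qed

definition ccP :: "'a::real_vector set \<Rightarrow> bool" where
  "ccP U \<longleftrightarrow> (\<exists>F. (\<forall>B\<in>F. convex B \<and> cor B = B) \<and> U = \<Union>F)"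

lemma istop_ccP: "istopology (ccP :: 'a::real_vector set \<Rightarrow> bool)"
  unfolding istopology_def
proof (intro conjI allI impI)
  fix S T :: "'a set"
  assume "ccP S" "ccP T"
  then obtain F G where F: "\<forall>B\<in>F. convex B \<and> cor B = B" "S = \<Union>F"
    and G: "\<forall>B\<in>G. convex B \<and> cor B = B" "T = \<Union>G"
    unfolding ccP_def by blast
  let ?H = "{B \<inter> C | B C. B \<in> F \<and> C \<in> G}"
  have "\<forall>D\<in>?H. convex D \<and> cor D = D"
  proof
    fix D assume "D \<in> ?H"
    then obtain B C where D: "D = B \<inter> C" "B \<in> F" "C \<in> G" by blast
    hence "convex B" "cor B = B" "convex C" "cor C = C" using F G by auto
    thus "convex D \<and> cor D = D" unfolding D(1) by (simp add: convex_Int cor_inter)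
  qed
  moreover have "S \<inter> T = \<Union>?H" unfolding F(2) G(2) by blast
  ultimately show "ccP (S \<inter> T)" unfolding ccP_def by (intro exI[of _ ?H]) simp
next
  fix K :: "'a set set"
  assume "\<forall>K\<in>K. ccP K"
  hence "\<forall>U\<in>K. \<exists>F. (\<forall>B\<in>F. convex B \<and> cor B = B) \<and> U = \<Union>F"
    unfolding ccP_def by blast
  hence "\<exists>FF. \<forall>U\<in>K. (\<forall>B\<in>FF U. convex B \<and> cor B = B) \<and> U = \<Union>(FF U)"
    by (rule bchoice)
  then obtain FF where FF: "\<forall>U\<in>K. (\<forall>B\<in>FF U. convex B \<and> cor B = B) \<and> U = \<Union>(FF U)"
    by blast
  have "\<forall>B\<in>\<Union>(FF ` K). convex B \<and> cor B = B" using FF by blast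
  moreover have "\<Union>K = \<Union>(\<Union>(FF ` K))"
  proof -
    have "U = \<Union>(FF U)" if "U \<in> K" for U using FF that by blast
    thus ?thesis by blast
  qed
  ultimately show "ccP (\<Union>K)" unfolding ccP_def by (intro exI[of _ "\<Union>(FF ` K)"]) simp
qed

lemma openin_cct: "openin core_convex_topology U = ccP (U::'a::real_vector set)"
proof -
  have e: "(core_convex_topology::'a topology) = topology ccP"
    unfolding core_convex_topology_def ccP_def[abs_def] by simp
  show ?thesis unfolding e by (rule fun_cong[OF topology_inverse'[OF istop_ccP]])
qed

lemma cor_mono: "B \<subseteq> S \<Longrightarrow> cor B \<subseteq> cor S"
proof
  fix x assume BS: "B \<subseteq> S" and x: "x \<in> cor B"
  have "\<exists>l'>0. \<forall>l\<in>{0..l'}. x + l *\<^sub>R v \<in> S" for v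
  proof -
    from x obtain l' where "l' > 0" "\<forall>l\<in>{0..l'}. x + l *\<^sub>R v \<in> B"
      unfolding cor_def by blast
    thus ?thesis using BS by blast
  qed
  moreover have "x \<in> S" using x BS cor_subset by blast
  ultimately show "x \<in> cor S" unfolding cor_def by blast
qed

lemma int_c_sub: "int_c S \<subseteq> cor S"
proof
  fix x assume "x \<in> int_c S"
  then obtain T where T: "openin core_convex_topology T" "x \<in> T" "T \<subseteq> S"
    unfolding int_c_def interior_of_def by blast
  from T(1) have "ccP T" by (simp only: openin_cct)
  then obtain F where F: "\<forall>B\<in>F. convex B \<and> cor B = B" "T = \<Union>F"
    unfolding ccP_def by blast
  with T obtain B where B: "B \<in> F" "x \<in> B" by blast
  have cB: "cor B = B" using F(1) B(1) by blast
  have "B \<subseteq> S" using B(1) F(2) T(3) by blast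
  hence "cor B \<subseteq> cor S" by (rule cor_mono)
  thus "x \<in> cor S" using B(2) cB by blast
qed

lemma fun_case:
  fixes A :: "'a::real_vector set"
  assumes L: "subspace L" and AL: "\<forall>a\<in>A. a - a0 \<in> L" and d: "x - a0 \<notin> L"
  shows "\<exists>B. convex B \<and> cor B = B \<and> x \<in> B \<and> B \<subseteq> UNIV - A"
proof -
  obtain Bl where Bl: "Bl \<subseteq> L" "independent Bl" "L \<subseteq> span Bl"
    using maximal_independent_subset[of L] by blast
  have spL: "span Bl \<subseteq> L" using Bl(1) L by (metis span_minimal)
  have dn: "x - a0 \<notin> span Bl" using d spL by blast
  hence ind: "independent (insert (x - a0) Bl)" using Bl(2) by (simp add: independent_insert)
  obtain g :: "'a \<Rightarrow> real" where g: "linear g"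
    "\<forall>b\<in>insert (x - a0) Bl. g b = (if b = x - a0 then 1 else 0)"
    using linear_independent_extend[OF ind, of "\<lambda>b. if b = x - a0 then 1 else 0"] by blast
  have g1: "g (x - a0) = 1" using g(2) by simp
  have g0: "g y = 0" if "y \<in> L" for y
  proof -
    have "g b = 0" if b: "b \<in> Bl" for b
    proof -
      have "b \<in> span Bl" using b by (rule span_base)
      hence "b \<noteq> x - a0" using dn by blast
      thus ?thesis using g(2) b by simp
    qed
    thus ?thesis using linear_eq_0_on_span[OF g(1)] that Bl(3) by blast
  qed
  define B where "B = {y. g (y - a0) > 1/2}"
  have gd: "g (y - a0) = g y - g a0" for y using g(1) by (simp add: linear_diff)
  have gl: "g (y + l *\<^sub>R v) = g y + l * g v" for y v l using g(1) by (simp add: linear_add linear_scale)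
  have "convex B"
    unfolding convex_def B_def
  proof (intro allI impI ballI, safe)
    fix y z :: 'a and u v :: real
    assume h: "1/2 < g (y - a0)" "1/2 < g (z - a0)" "0 \<le> u" "0 \<le> v" "u + v = 1"
    have "g (u *\<^sub>R y + v *\<^sub>R z - a0) = u * g (y - a0) + v * g (z - a0)"
    proof -
      have "u *\<^sub>R y + v *\<^sub>R z - a0 = u *\<^sub>R (y - a0) + v *\<^sub>R (z - a0)"
        using h(5) by (simp add: algebra_simps flip: scaleR_add_left)
      thus ?thesis using g(1) by (simp add: linear_add linear_scale)
    qed
    also have "\<dots> > u * (1/2) + v * (1/2)"
    proof -
      have "u * (1/2) \<le> u * g (y - a0)" using h by (intro mult_left_mono) auto
      moreover have "v * (1/2) \<le> v * g (z - a0)" using h by (intro mult_left_mono) auto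
      moreover have "u > 0 \<or> v > 0" using h by auto
      moreover have "u > 0 \<Longrightarrow> u * (1/2) < u * g (y - a0)" using h by simp
      moreover have "v > 0 \<Longrightarrow> v * (1/2) < v * g (z - a0)" using h by simp
      ultimately show ?thesis by linarith
    qed
    finally show "1/2 < g (u *\<^sub>R y + v *\<^sub>R z - a0)" using h(5) by (simp add: algebra_simps)
  qed
  moreover have "cor B = B"
  proof
    show "cor B \<subseteq> B" by (rule cor_subset)
    show "B \<subseteq> cor B"
    proof
      fix y assume y: "y \<in> B"
      have "\<exists>l'>0. \<forall>l\<in>{0..l'}. y + l *\<^sub>R v \<in> B" for v
      proof -
        define e where "e = g (y - a0) - 1/2"
        have e: "e > 0" using y by (simp add: B_def e_def)
        define l' where "l' = e / (\<bar>g v\<bar> + 1)"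
        have l': "l' > 0" using e by (simp add: l'_def)
        have "y + l *\<^sub>R v \<in> B" if l: "l \<in> {0..l'}" for l
        proof -
          have "l * \<bar>g v\<bar> \<le> l' * \<bar>g v\<bar>" using l by (intro mult_right_mono) auto
          also have "\<dots> < e"
          proof -
            have "l' * (\<bar>g v\<bar> + 1) = e" by (simp add: l'_def)
            thus ?thesis using l' by (simp add: algebra_simps)
          qed
          finally have "l * \<bar>g v\<bar> < e" .
          moreover have "- (l * \<bar>g v\<bar>) \<le> l * g v"
          proof -
            have "- \<bar>g v\<bar> \<le> g v" by simp
            hence "l * (- \<bar>g v\<bar>) \<le> l * g v" using l by (intro mult_left_mono) auto
            thus ?thesis by simp
          qed
          moreover have "g (y + l *\<^sub>R v - a0) = g (y - a0) + l * g v"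
            using gd[of "y + l *\<^sub>R v"] gd[of y] gl[of y l v] by simp
          ultimately have "g (y + l *\<^sub>R v - a0) > 1/2" unfolding e_def by linarith
          thus ?thesis unfolding B_def by simp
        qed
        thus ?thesis using l' by blast
      qed
      with y show "y \<in> cor B" unfolding cor_def by blast
    qed
  qed
  moreover have "x \<in> B" using g1 by (simp add: B_def)
  moreover have "B \<subseteq> UNIV - A" using g0 AL by (auto simp: B_def)
  ultimately show ?thesis by blast
qed

lemma proj_case:
  fixes A :: "'a::real_vector set"
  assumes cA: "convex A" and a0: "a0 \<in> A" and L: "subspace L"
    and icr: "\<forall>v\<in>L. \<exists>l'>0. \<forall>l\<in>{0..l'}. a0 + l *\<^sub>R v \<in> A"
    and AL: "\<forall>a\<in>A. a - a0 \<in> L" and d: "x - a0 \<in> L" and x: "x \<in> cor (UNIV - A)"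
  shows "\<exists>B. convex B \<and> cor B = B \<and> x \<in> B \<and> B \<subseteq> UNIV - A"
proof -
  obtain l1 where l1: "l1 > 0" "\<forall>l\<in>{0..l1}. x + l *\<^sub>R (a0 - x) \<in> UNIV - A"
    using x unfolding cor_def by blast
  define t where "t = min l1 (1/2)"
  have t: "0 < t" "t \<le> 1/2" "t \<le> l1" using l1 by (auto simp: t_def)
  have zA: "x + t *\<^sub>R (a0 - x) \<notin> A" using l1 t by auto
  define \<delta> where "\<delta> = t / (1 - t)"
  have \<delta>: "\<delta> > 0" "(1 - t) * \<delta> = t" using t by (auto simp: \<delta>_def)
  define U where "U = {u. a0 + u \<in> A \<and> a0 - u \<in> A}"
  define Oo where "Oo = {u. \<forall>v\<in>L. \<exists>l'>0. \<forall>l\<in>{0..l'}. u + l *\<^sub>R v \<in> U}"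
  have cU: "convex U"
    unfolding convex_def U_def
  proof (intro allI impI ballI, safe)
    fix u w :: 'a and p q :: real
    assume h: "a0 + u \<in> A" "a0 - u \<in> A" "a0 + w \<in> A" "a0 - w \<in> A" "0 \<le> p" "0 \<le> q" "p + q = 1"
    have e1: "a0 + (p *\<^sub>R u + q *\<^sub>R w) = p *\<^sub>R (a0 + u) + q *\<^sub>R (a0 + w)"
      using h(7) by (simp add: algebra_simps flip: scaleR_add_left)
    have e2: "a0 - (p *\<^sub>R u + q *\<^sub>R w) = p *\<^sub>R (a0 - u) + q *\<^sub>R (a0 - w)"
      using h(7) by (simp add: algebra_simps flip: scaleR_add_left)
    show "a0 + (p *\<^sub>R u + q *\<^sub>R w) \<in> A" unfolding e1 using h cA by (simp add: convexD)
    show "a0 - (p *\<^sub>R u + q *\<^sub>R w) \<in> A" unfolding e2 using h cA by (simp add: convexD)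
  qed
  have OU: "Oo \<subseteq> U"
  proof
    fix u assume "u \<in> Oo"
    then obtain l' where "l' > 0" "\<forall>l\<in>{0..l'}. u + l *\<^sub>R 0 \<in> U"
      unfolding Oo_def using subspace_0[OF L] by blast
    thus "u \<in> U" by auto
  qed
  have cO: "convex Oo"
    unfolding convex_def
  proof (intro allI impI ballI)
    fix u w :: 'a and p q :: real
    assume h: "u \<in> Oo" "w \<in> Oo" "0 \<le> p" "0 \<le> q" "p + q = 1"
    show "p *\<^sub>R u + q *\<^sub>R w \<in> Oo" unfolding Oo_def
    proof (intro CollectI ballI)
      fix v assume v: "v \<in> L"
      obtain m1 where m1: "m1 > 0" "\<forall>l\<in>{0..m1}. u + l *\<^sub>R v \<in> U" using h(1) v unfolding Oo_def by blast
      obtain m2 where m2: "m2 > 0" "\<forall>l\<in>{0..m2}. w + l *\<^sub>R v \<in> U" using h(2) v unfolding Oo_def by blast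
      have "p *\<^sub>R u + q *\<^sub>R w + l *\<^sub>R v \<in> U" if l: "l \<in> {0..min m1 m2}" for l
      proof -
        have "p *\<^sub>R u + q *\<^sub>R w + l *\<^sub>R v = p *\<^sub>R (u + l *\<^sub>R v) + q *\<^sub>R (w + l *\<^sub>R v)"
          using h(3-5) by (simp add: algebra_simps flip: scaleR_add_left distrib_left)
        moreover have "u + l *\<^sub>R v \<in> U" "w + l *\<^sub>R v \<in> U" using l m1 m2 by auto
        ultimately show ?thesis using cU h(3-5) by (simp add: convexD)
      qed
      thus "\<exists>l'>0. \<forall>l\<in>{0..l'}. p *\<^sub>R u + q *\<^sub>R w + l *\<^sub>R v \<in> U"
        using m1 m2 by (intro exI[of _ "min m1 m2"]) auto
    qed
  qed
  have oO: "\<exists>l'>0. \<forall>l\<in>{0..l'}. u + l *\<^sub>R w \<in> Oo" if u: "u \<in> Oo" and w: "w \<in> L" for u w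
  proof -
    have "2 *\<^sub>R w \<in> L" using w L by (simp add: subspace_scale)
    then obtain k where k: "k > 0" "\<forall>l\<in>{0..k}. u + l *\<^sub>R (2 *\<^sub>R w) \<in> U" using u unfolding Oo_def by blast
    have "u + l *\<^sub>R w \<in> Oo" if l: "l \<in> {0..k/2}" for l
      unfolding Oo_def
    proof (intro CollectI ballI)
      fix v assume v: "v \<in> L"
      have "2 *\<^sub>R v \<in> L" using v L by (simp add: subspace_scale)
      then obtain m where m: "m > 0" "\<forall>l\<in>{0..m}. u + l *\<^sub>R (2 *\<^sub>R v) \<in> U" using u unfolding Oo_def by blast
      have "u + l *\<^sub>R w + n *\<^sub>R v \<in> U" if n: "n \<in> {0..m/2}" for n
      proof -
        have "u + l *\<^sub>R w + n *\<^sub>R v = (1/2) *\<^sub>R (u + l *\<^sub>R (2 *\<^sub>R w)) + (1/2) *\<^sub>R (u + n *\<^sub>R (2 *\<^sub>R v))"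
          by (simp add: algebra_simps flip: scaleR_add_left)
        moreover have "u + l *\<^sub>R (2 *\<^sub>R w) \<in> U" using k l by auto
        moreover have "u + n *\<^sub>R (2 *\<^sub>R v) \<in> U" using m n by auto
        ultimately show ?thesis using cU by (simp add: convexD)
      qed
      thus "\<exists>l'>0. \<forall>n\<in>{0..l'}. u + l *\<^sub>R w + n *\<^sub>R v \<in> U" using m by (intro exI[of _ "m/2"]) auto
    qed
    thus ?thesis using k by (intro exI[of _ "k/2"]) auto
  qed
  have O0: "0 \<in> Oo"
    unfolding Oo_def
  proof (intro CollectI ballI)
    fix v assume v: "v \<in> L"
    obtain k1 where k1: "k1 > 0" "\<forall>l\<in>{0..k1}. a0 + l *\<^sub>R v \<in> A" using icr v by blast
    have "- v \<in> L" using v L by (simp add: subspace_neg)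
    then obtain k2 where k2: "k2 > 0" "\<forall>l\<in>{0..k2}. a0 + l *\<^sub>R (- v) \<in> A" using icr by blast
    have "0 + l *\<^sub>R v \<in> U" if "l \<in> {0..min k1 k2}" for l
      using k1 k2 that by (auto simp: U_def)
    thus "\<exists>l'>0. \<forall>l\<in>{0..l'}. 0 + l *\<^sub>R v \<in> U" using k1 k2 by (intro exI[of _ "min k1 k2"]) auto
  qed
  obtain P where P: "range P \<subseteq> L" "linear P" "\<forall>v\<in>L. P v = v"
    using linear_exists_left_inverse_on[of id L] L linear_id by auto
  define B where "B = {y. (1/\<delta>) *\<^sub>R P (y - x) \<in> Oo}"
  have Pd: "P (y - x) = P y - P x" for y using P(2) by (simp add: linear_diff)
  have convB: "convex B"
    unfolding convex_def B_def
  proof (intro allI impI ballI, safe)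
    fix y z :: 'a and p q :: real
    assume h: "(1/\<delta>) *\<^sub>R P (y - x) \<in> Oo" "(1/\<delta>) *\<^sub>R P (z - x) \<in> Oo" "0 \<le> p" "0 \<le> q" "p + q = 1"
    have "(1/\<delta>) *\<^sub>R P (p *\<^sub>R y + q *\<^sub>R z - x) = p *\<^sub>R ((1/\<delta>) *\<^sub>R P (y - x)) + q *\<^sub>R ((1/\<delta>) *\<^sub>R P (z - x))"
    proof -
      have e: "p *\<^sub>R y + q *\<^sub>R z - x = p *\<^sub>R (y - x) + q *\<^sub>R (z - x)"
        using h(5) by (simp add: algebra_simps flip: scaleR_add_left)
      have "P (p *\<^sub>R y + q *\<^sub>R z - x) = p *\<^sub>R P (y - x) + q *\<^sub>R P (z - x)"
        unfolding e using P(2) by (simp add: linear_add linear_scale)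
      thus ?thesis by (simp add: scaleR_add_right mult.commute)
    qed
    show "(1/\<delta>) *\<^sub>R P (p *\<^sub>R y + q *\<^sub>R z - x) \<in> Oo" unfolding \<open>(1/\<delta>) *\<^sub>R P (p *\<^sub>R y + q *\<^sub>R z - x) = _\<close>
      by (rule convexD[OF cO h(1) h(2) h(3) h(4) h(5)])
  qed
  have corB: "cor B = B"
  proof
    show "cor B \<subseteq> B" by (rule cor_subset)
    show "B \<subseteq> cor B"
    proof
      fix y assume y: "y \<in> B"
      have "\<exists>l'>0. \<forall>l\<in>{0..l'}. y + l *\<^sub>R v \<in> B" for v
      proof -
        have wL: "(1/\<delta>) *\<^sub>R P v \<in> L" using P(1) L by (simp add: subspace_scale range_subsetD)
        have "(1/\<delta>) *\<^sub>R P (y - x) \<in> Oo" using y by (simp add: B_def)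
        then obtain l' where l': "l' > 0" "\<forall>l\<in>{0..l'}. (1/\<delta>) *\<^sub>R P (y - x) + l *\<^sub>R ((1/\<delta>) *\<^sub>R P v) \<in> Oo"
          using oO wL by blast
        have "(1/\<delta>) *\<^sub>R P (y + l *\<^sub>R v - x) = (1/\<delta>) *\<^sub>R P (y - x) + l *\<^sub>R ((1/\<delta>) *\<^sub>R P v)" for l
        proof -
          have e: "y + l *\<^sub>R v - x = (y - x) + l *\<^sub>R v" by (simp add: algebra_simps)
          have "P (y + l *\<^sub>R v - x) = P (y - x) + l *\<^sub>R P v"
            unfolding e using P(2) by (simp add: linear_add linear_scale)
          thus ?thesis by (simp add: scaleR_add_right mult.commute)
        qed
        thus ?thesis using l' by (auto simp: B_def)
      qed
      with y show "y \<in> cor B" unfolding cor_def by blast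
    qed
  qed
  have xB: "x \<in> B" using O0 P(2) by (simp add: B_def linear_0)
  have BA: "B \<subseteq> UNIV - A"
  proof (rule ccontr)
    assume "\<not> B \<subseteq> UNIV - A"
    then obtain y where y: "y \<in> B" "y \<in> A" by blast
    have "y - x = (y - a0) - (x - a0)" by simp
    hence yxL: "y - x \<in> L" using AL y(2) d L by (metis subspace_diff)
    define u where "u = (1/\<delta>) *\<^sub>R (y - x)"
    have "u \<in> Oo" using y(1) P(3) yxL by (simp add: B_def u_def)
    hence "a0 - u \<in> A" using OU by (auto simp: U_def)
    have yeq: "y = x + \<delta> *\<^sub>R u" using \<delta> by (simp add: u_def)
    have "x + t *\<^sub>R (a0 - x) = (1 - t) *\<^sub>R y + t *\<^sub>R (a0 - u)"
    proof -
      have "(1 - t) *\<^sub>R y + t *\<^sub>R (a0 - u) = (1 - t) *\<^sub>R x + ((1 - t) * \<delta>) *\<^sub>R u + t *\<^sub>R a0 - t *\<^sub>R u"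
        unfolding yeq by (simp add: algebra_simps)
      also have "\<dots> = x + t *\<^sub>R (a0 - x)" unfolding \<delta>(2) by (simp add: algebra_simps)
      finally show ?thesis by simp
    qed
    moreover have "(1 - t) *\<^sub>R y + t *\<^sub>R (a0 - u) \<in> A"
      using cA y(2) \<open>a0 - u \<in> A\<close> t by (simp add: convexD)
    ultimately show False using zA by simp
  qed
  show ?thesis using convB corB xB BA by blast
qed

lemma key:
  fixes A :: "'a::real_vector set"
  assumes cA: "convex A" and rs: "relatively_solid A" and x: "x \<in> cor (UNIV - A)"
  shows "\<exists>B. convex B \<and> cor B = B \<and> x \<in> B \<and> B \<subseteq> UNIV - A"
proof -
  define L where "L = span {a - b | a b. a \<in> A \<and> b \<in> A}"
  obtain a0 where a0: "a0 \<in> icr A" using rs unfolding relatively_solid_def by blast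
  have a0': "a0 \<in> A \<and> (\<forall>v\<in>L. \<exists>l'>0. \<forall>l\<in>{0..l'}. a0 + l *\<^sub>R v \<in> A)"
    using a0 unfolding icr_def L_def by simp
  have a0A: "a0 \<in> A" using a0' by (rule conjunct1)
  have icr: "\<forall>v\<in>L. \<exists>l'>0. \<forall>l\<in>{0..l'}. a0 + l *\<^sub>R v \<in> A" using a0' by (rule conjunct2)
  have L: "subspace L" unfolding L_def by (rule subspace_span)
  have AL: "\<forall>a\<in>A. a - a0 \<in> L"
  proof
    fix a assume "a \<in> A"
    hence "a - a0 \<in> {a - b | a b. a \<in> A \<and> b \<in> A}" using a0A by blast
    thus "a - a0 \<in> L" unfolding L_def by (rule span_base)
  qed
  show ?thesis
  proof (cases "x - a0 \<in> L")
    case True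
    show ?thesis by (rule proj_case[OF cA a0A L icr AL True x])
  next
    case False
    show ?thesis by (rule fun_case[OF L AL False])
  qed
qed

lemma cor_comp_vcl: "x \<in> cor (UNIV - A) \<longleftrightarrow> x \<notin> vcl A"
proof
  assume c: "x \<in> cor (UNIV - A)"
  show "x \<notin> vcl A"
  proof
    assume "x \<in> vcl A"
    then obtain v where v: "\<forall>l'>0. \<exists>l\<in>{0..l'}. x + l *\<^sub>R v \<in> A"
      unfolding vcl_def by blast
    from c obtain l' where "l' > 0" "\<forall>l\<in>{0..l'}. x + l *\<^sub>R v \<in> UNIV - A"
      unfolding cor_def by blast
    with v show False by blast
  qed
next
  assume n: "x \<notin> vcl A"
  hence h: "\<forall>v. \<exists>l'>0. \<forall>l\<in>{0..l'}. x + l *\<^sub>R v \<in> UNIV - A"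
    unfolding vcl_def by (auto simp: not_less)
  from h[rule_format, of 0] have "x \<in> UNIV - A" by auto
  with h show "x \<in> cor (UNIV - A)" unfolding cor_def by blast
qed

theorem proposition4p6:
  fixes A :: "'a::real_vector set"
  assumes "convex A" and "relatively_solid A"
  shows "cor (UNIV - A) = int_c (UNIV - A) \<and> alg_boundary A = vcl A - cor A"
proof
  show "cor (UNIV - A) = int_c (UNIV - A)"
  proof
    show "int_c (UNIV - A) \<subseteq> cor (UNIV - A)" by (rule int_c_sub)
    show "cor (UNIV - A) \<subseteq> int_c (UNIV - A)"
    proof
      fix x assume "x \<in> cor (UNIV - A)"
      then obtain B where B: "convex B" "cor B = B" "x \<in> B" "B \<subseteq> UNIV - A"
        using key assms by blast
      have "ccP B" unfolding ccP_def using B by (intro exI[of _ "{B}"]) auto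
      with B show "x \<in> int_c (UNIV - A)"
        unfolding int_c_def interior_of_def openin_cct by blast
    qed
  qed
  show "alg_boundary A = vcl A - cor A"
    unfolding alg_boundary_def using cor_comp_vcl by blast
qed

end
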